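(* For all integers $1\le k<N$, $$\alpha\bigl(P^{\mathsf{cc}}_{k,N}\bigr)\;\ge\;\frac{1}{19}\,\alpha\bigl(P^{\mathsf{ucc}}_{k,N}\bigr).$$
   Context: $\Theta_{k,N}$ denotes the set of $k$-tuples $(x_1,\dots,x_k)\in[N]^k$ with pairwise distinct entries. Standard $k$-clique $N$-coloring chain $P^{\mathsf{cc}}_{k,N}$: the Markov chain on $\Theta_{k,N}$ which from state $x=(x_1,\dots,x_k)$ samples $\boldsymbol i\in[k]$ uniformly and then $\boldsymbol\ell$ uniformly from $\{\ell\in[N]:\ell\notin\{x_1,\dots,x_k\}\}\cup\{x_{\boldsymbol i}\}$ (a set of size $N-k+1$), and moves to $x$ with its $\boldsymbol i$-th entry replaced by $\boldsymbol\ell$. Uniform $k$-clique $N$-coloring chain $P^{\mathsf{ucc}}_{k,N}$: for $x\in\Theta_{k,N}$, $i\in[k]$, $\ell\in[N]$, let $x^{i,\ell}$ be $x$ with the $i$-th entry replaced by $\ell$ if $\ell\notin\{x_1,\dots,x_k\}$, and $x$ with the entries in positions $i$ and $j$ swapped if $\ell=x_j$. The chain moves from $x$ to $x^{\boldsymbol i,\boldsymbol\ell}$ with $\boldsymbol i\in[k]$, $\boldsymbol\ell\in[N]$ uniform and independent. Both chains have the uniform stationary distribution on $\Theta_{k,N}$. Log-Sobolev constant: for an ergodic Markov chain with transition matrix $P$ on finite state space $V$ with stationary distribution $\pi$, $\mathcal E_P(g,g)=\frac12\sum_{x,y\in V}(g(x)-g(y))^2\pi(x)P(x,y)$; for $f:V\to\mathbb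 R_{\ge 0}$, $\mathrm{Ent}_\pi[f]=\sum_{x}\pi(x)f(x)\log\frac{f(x)}{\mathbb E_\pi[f]}$ (natural log); and $\alpha(P)=\inf\{\mathcal E_P(\sqrt f,\sqrt f)/\mathrm{Ent}_\pi[f] : f\ge 0,\ f \text{ non-constant}\}$. *)

theory Defs
  imports Complex_Main
begin

definition dirichlet_form ::
  "'a set \<Rightarrow> ('a \<Rightarrow> real) \<Rightarrow> ('a \<Rightarrow> 'a \<Rightarrow> real) \<Rightarrow> ('a \<Rightarrow> real) \<Rightarrow> real" where
  "dirichlet_form V \<pi> P g =
     (1/2) * (\<Sum>x\<in>V. \<Sum>y\<in>V. (g x - g y)^2 * \<pi> x * P x y)"

definition expect :: "'a set \<Rightarrow> ('a \<Rightarrow> real) \<Rightarrow> ('a \<Rightarrow> real) \<Rightarrow> real" where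
  "expect V \<pi> f = (\<Sum>x\<in>V. \<pi> x * f x)"

definition entropy :: "'a set \<Rightarrow> ('a \<Rightarrow> real) \<Rightarrow> ('a \<Rightarrow> real) \<Rightarrow> real" where
  "entropy V \<pi> f =
     (\<Sum>x\<in>V. \<pi> x * (if f x = 0 then 0 else f x * ln (f x / expect V \<pi> f)))"

definition log_sobolev ::
  "'a set \<Rightarrow> ('a \<Rightarrow> real) \<Rightarrow> ('a \<Rightarrow> 'a \<Rightarrow> real) \<Rightarrow> real" where
  "log_sobolev V \<pi> P =
     Inf {dirichlet_form V \<pi> P (\<lambda>x. sqrt (f x)) / entropy V \<pi> f | f.
            (\<forall>x\<in>V. f x \<ge> 0) \<and> (\<exists>x\<in>V. \<exists>y\<in>V. f x \<noteq> f y)}"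

definition uniform_dist :: "'a set \<Rightarrow> 'a \<Rightarrow> real" where
  "uniform_dist V x = 1 / real (card V)"

definition Theta :: "nat \<Rightarrow> nat \<Rightarrow> nat list set" where
  "Theta k N = {xs. length xs = k \<and> distinct xs \<and> set xs \<subseteq> {1..N}}"

text \<open>Standard chain: pick i uniform in [k] (index i < k), then l uniform in
  ([N] - {x_1..x_k}) \<union> {x_i} (size N-k+1), replace i-th entry by l.\<close>
definition P_cc :: "nat \<Rightarrow> nat \<Rightarrow> nat list \<Rightarrow> nat list \<Rightarrow> real" where
  "P_cc k N x y =
     (\<Sum>i<k. \<Sum>l\<in>({1..N} - set x) \<union> {x ! i}.
        if x[i := l] = y then 1 / (real k * (real N - real k + 1)) else 0)"

definition ucc_move :: "nat list \<Rightarrow> nat \<Rightarrow> nat \<Rightarrow> nat list" where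
  "ucc_move x i l =
     (if l \<notin> set x then x[i := l]
      else (let j = (THE j. j < length x \<and> x ! j = l) in x[i := x ! j, j := x ! i]))"

definition P_ucc :: "nat \<Rightarrow> nat \<Rightarrow> nat list \<Rightarrow> nat list \<Rightarrow> real" where
  "P_ucc k N x y =
     (\<Sum>i<k. \<Sum>l\<in>{1..N}. if ucc_move x i l = y then 1 / (real k * real N) else 0)"

end

theory Submission
  imports Defs
begin


lemma Theta_finite: "finite (Theta k N)"
proof -
  have "Theta k N \<subseteq> {xs. set xs \<subseteq> {1..N} \<and> length xs = k}" by (auto simp: Theta_def)
  thus ?thesis by (rule finite_subset) (rule finite_lists_length_eq, simp)
qed

lemma upd_Theta:
  assumes "x \<in> Theta k N" "i < k" "l \<in> ({1..N} - set x) \<union> {x!i}"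
  shows "x[i:=l] \<in> Theta k N"
  using assms set_update_subset_insert[of x i l] distinct_list_update[of x l i]
  by (auto simp: Theta_def)

lemma swap_Theta:
  assumes "x \<in> Theta k N" "i < k" "j < k"
  shows "x[i:=x!j, j:=x!i] \<in> Theta k N"
  using assms by (auto simp: Theta_def)

lemma ucc_move_swap:
  assumes "x \<in> Theta k N" "i < k" "j < k"
  shows "ucc_move x i (x!j) = x[i:=x!j, j:=x!i]"
proof -
  have d: "distinct x" "length x = k" using assms by (auto simp: Theta_def)
  have "(THE j'. j' < length x \<and> x ! j' = x!j) = j"
    using d assms by (intro the_equality) (auto simp: nth_eq_iff_index_eq)
  thus ?thesis using assms d unfolding ucc_move_def by (auto simp: Let_def)
qed

lemma card_free: assumes "x \<in> Theta k N" shows "card ({1..N} - set x) = N - k"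
proof -
  have "set x \<subseteq> {1..N}" "distinct x" "length x = k" using assms by (auto simp: Theta_def)
  thus ?thesis by (simp add: card_Diff_subset distinct_card)
qed

lemma sumP_cc:
  assumes x: "x \<in> Theta k N"
  shows "(\<Sum>y\<in>Theta k N. h y * P_cc k N x y) =
    (\<Sum>i<k. \<Sum>l\<in>({1..N} - set x) \<union> {x!i}. h (x[i:=l])) / (real k * (real N - real k + 1))"
proof -
  let ?c = "1 / (real k * (real N - real k + 1))"
  let ?V = "Theta k N"
  have "(\<Sum>y\<in>?V. h y * P_cc k N x y) =
     (\<Sum>y\<in>?V. \<Sum>i<k. \<Sum>l\<in>({1..N} - set x) \<union> {x!i}. if x[i:=l] = y then h y * ?c else 0)"
    unfolding P_cc_def by (simp add: sum_distrib_left if_distrib cong: if_cong)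
  also have "\<dots> = (\<Sum>i<k. \<Sum>y\<in>?V. \<Sum>l\<in>({1..N} - set x) \<union> {x!i}. if x[i:=l] = y then h y * ?c else 0)"
    by (rule sum.swap)
  also have "\<dots> = (\<Sum>i<k. \<Sum>l\<in>({1..N} - set x) \<union> {x!i}. \<Sum>y\<in>?V. if x[i:=l] = y then h y * ?c else 0)"
    by (rule sum.cong[OF refl], rule sum.swap)
  also have "\<dots> = (\<Sum>i<k. \<Sum>l\<in>({1..N} - set x) \<union> {x!i}. h (x[i:=l]) * ?c)"
    using upd_Theta[OF x] by (intro sum.cong refl) (simp add: Theta_finite)
  also have "\<dots> = (\<Sum>i<k. \<Sum>l\<in>({1..N} - set x) \<union> {x!i}. h (x[i:=l])) * ?c"
    by (simp add: sum_divide_distrib)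
  finally show ?thesis by simp
qed

lemma sumP_ucc:
  assumes x: "x \<in> Theta k N"
  shows "(\<Sum>y\<in>Theta k N. h y * P_ucc k N x y) =
    (\<Sum>i<k. \<Sum>l\<in>{1..N}. h (ucc_move x i l)) / (real k * real N)"
proof -
  let ?c = "1 / (real k * real N)"
  let ?V = "Theta k N"
  have mem: "\<And>i l. i < k \<Longrightarrow> l \<in> {1..N} \<Longrightarrow> ucc_move x i l \<in> ?V"
  proof -
    fix i l assume i: "i < k" and l: "l \<in> {1..N}"
    show "ucc_move x i l \<in> ?V"
    proof (cases "l \<in> set x")
      case True
      then obtain j where j: "j < length x" "x!j = l" by (auto simp: in_set_conv_nth)
      have "length x = k" using x by (simp add: Theta_def)
      thus ?thesis using ucc_move_swap[OF x i, of j] swap_Theta[OF x i, of j] j by auto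
    next
      case False
      thus ?thesis using upd_Theta[OF x i, of l] l by (simp add: ucc_move_def)
    qed
  qed
  have "(\<Sum>y\<in>?V. h y * P_ucc k N x y) =
     (\<Sum>y\<in>?V. \<Sum>i<k. \<Sum>l\<in>{1..N}. if ucc_move x i l = y then h y * ?c else 0)"
    unfolding P_ucc_def by (simp add: sum_distrib_left if_distrib cong: if_cong)
  also have "\<dots> = (\<Sum>i<k. \<Sum>y\<in>?V. \<Sum>l\<in>{1..N}. if ucc_move x i l = y then h y * ?c else 0)"
    by (rule sum.swap)
  also have "\<dots> = (\<Sum>i<k. \<Sum>l\<in>{1..N}. \<Sum>y\<in>?V. if ucc_move x i l = y then h y * ?c else 0)"
    by (rule sum.cong[OF refl], rule sum.swap)
  also have "\<dots> = (\<Sum>i<k. \<Sum>l\<in>{1..N}. h (ucc_move x i l) * ?c)"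
    using mem by (intro sum.cong refl) (simp add: Theta_finite)
  also have "\<dots> = (\<Sum>i<k. \<Sum>l\<in>{1..N}. h (ucc_move x i l)) * ?c"
    by (simp add: sum_divide_distrib)
  finally show ?thesis by simp
qed



definition SS :: "nat \<Rightarrow> nat \<Rightarrow> (nat list \<Rightarrow> real) \<Rightarrow> real" where
  "SS k N g = (\<Sum>x\<in>Theta k N. \<Sum>i<k. \<Sum>l\<in>{1..N} - set x. (g x - g (x[i:=l]))^2)"

definition WW :: "nat \<Rightarrow> nat \<Rightarrow> (nat list \<Rightarrow> real) \<Rightarrow> real" where
  "WW k N g = (\<Sum>x\<in>Theta k N. \<Sum>i<k. \<Sum>j<k. (g x - g (x[i:=x!j, j:=x!i]))^2)"

lemma dir_cc:
  "dirichlet_form (Theta k N) (uniform_dist (Theta k N)) (P_cc k N) g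
   = SS k N g / (2 * real (card (Theta k N)) * (real k * (real N - real k + 1)))"
proof -
  let ?V = "Theta k N"
  let ?c = "real k * (real N - real k + 1)"
  have "\<And>x. x \<in> ?V \<Longrightarrow> (\<Sum>y\<in>?V. (g x - g y)^2 * uniform_dist ?V x * P_cc k N x y)
     = (\<Sum>i<k. \<Sum>l\<in>{1..N} - set x. (g x - g (x[i:=l]))^2) / real (card ?V) / ?c"
  proof -
    fix x assume x: "x \<in> ?V"
    have "(\<Sum>y\<in>?V. (g x - g y)^2 * uniform_dist ?V x * P_cc k N x y)
       = (\<Sum>y\<in>?V. ((g x - g y)^2 / real (card ?V)) * P_cc k N x y)"
      by (simp add: uniform_dist_def)
    also have "\<dots> = (\<Sum>i<k. \<Sum>l\<in>({1..N} - set x) \<union> {x!i}. (g x - g (x[i:=l]))^2 / real (card ?V)) / ?c"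
      by (rule sumP_cc[OF x])
    also have "\<dots> = (\<Sum>i<k. \<Sum>l\<in>{1..N} - set x. (g x - g (x[i:=l]))^2 / real (card ?V)) / ?c"
    proof -
      have "\<And>i. i < k \<Longrightarrow> (\<Sum>l\<in>({1..N} - set x) \<union> {x!i}. (g x - g (x[i:=l]))^2 / real (card ?V))
          = (\<Sum>l\<in>{1..N} - set x. (g x - g (x[i:=l]))^2 / real (card ?V))"
        using x by (subst Un_commute) (auto simp: Theta_def)
      thus ?thesis by simp
    qed
    finally show "?thesis x" by (simp add: sum_divide_distrib)
  qed
  hence "dirichlet_form ?V (uniform_dist ?V) (P_cc k N) g =
     (1/2) * (\<Sum>x\<in>?V. (\<Sum>i<k. \<Sum>l\<in>{1..N} - set x. (g x - g (x[i:=l]))^2) / real (card ?V) / ?c)"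
    unfolding dirichlet_form_def by simp
  thus ?thesis unfolding SS_def by (simp add: sum_divide_distrib[symmetric])
qed

lemma ucc_inner:
  assumes x: "x \<in> Theta k N" and i: "i < k"
  shows "(\<Sum>l\<in>{1..N}. h (ucc_move x i l)) =
     (\<Sum>l\<in>{1..N} - set x. h (x[i:=l])) + (\<Sum>j<k. h (x[i:=x!j, j:=x!i]))"
proof -
  have sub: "set x \<subseteq> {1..N}" and d: "distinct x" and len: "length x = k" using x by (auto simp: Theta_def)
  have eq: "{1..N} = ({1..N} - set x) \<union> set x" using sub by auto
  have "(\<Sum>l\<in>{1..N}. h (ucc_move x i l)) = (\<Sum>l\<in>{1..N} - set x. h (ucc_move x i l)) + (\<Sum>l\<in>set x. h (ucc_move x i l))"
    by (subst eq, rule sum.union_disjoint) auto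
  also have "(\<Sum>l\<in>{1..N} - set x. h (ucc_move x i l)) = (\<Sum>l\<in>{1..N} - set x. h (x[i:=l]))"
    by (rule sum.cong) (auto simp: ucc_move_def)
  also have "(\<Sum>l\<in>set x. h (ucc_move x i l)) = (\<Sum>j<k. h (ucc_move x i (x!j)))"
  proof -
    have "set x = nth x ` {..<k}" using len by (auto simp: in_set_conv_nth)
    moreover have "inj_on (nth x) {..<k}" using d len by (auto simp: inj_on_def nth_eq_iff_index_eq)
    ultimately show ?thesis by (simp add: sum.reindex)
  qed
  also have "\<dots> = (\<Sum>j<k. h (x[i:=x!j, j:=x!i]))"
    by (rule sum.cong) (auto simp: ucc_move_swap[OF x i])
  finally show ?thesis .
qed

lemma dir_ucc:
  "dirichlet_form (Theta k N) (uniform_dist (Theta k N)) (P_ucc k N) g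
   = (SS k N g + WW k N g) / (2 * real (card (Theta k N)) * (real k * real N))"
proof -
  let ?V = "Theta k N"
  let ?c = "real k * real N"
  have "\<And>x. x \<in> ?V \<Longrightarrow> (\<Sum>y\<in>?V. (g x - g y)^2 * uniform_dist ?V x * P_ucc k N x y)
     = ((\<Sum>i<k. \<Sum>l\<in>{1..N} - set x. (g x - g (x[i:=l]))^2) + (\<Sum>i<k. \<Sum>j<k. (g x - g (x[i:=x!j, j:=x!i]))^2)) / real (card ?V) / ?c"
  proof -
    fix x assume x: "x \<in> ?V"
    have "(\<Sum>y\<in>?V. (g x - g y)^2 * uniform_dist ?V x * P_ucc k N x y)
       = (\<Sum>y\<in>?V. ((g x - g y)^2 / real (card ?V)) * P_ucc k N x y)"
      by (simp add: uniform_dist_def)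
    also have "\<dots> = (\<Sum>i<k. \<Sum>l\<in>{1..N}. (g x - g (ucc_move x i l))^2 / real (card ?V)) / ?c"
      by (rule sumP_ucc[OF x])
    also have "\<dots> = (\<Sum>i<k. (\<Sum>l\<in>{1..N} - set x. (g x - g (x[i:=l]))^2 / real (card ?V))
          + (\<Sum>j<k. (g x - g (x[i:=x!j, j:=x!i]))^2 / real (card ?V))) / ?c"
    proof -
      have "\<And>i. i < k \<Longrightarrow> (\<Sum>l\<in>{1..N}. (g x - g (ucc_move x i l))^2 / real (card ?V)) =
        (\<Sum>l\<in>{1..N} - set x. (g x - g (x[i:=l]))^2 / real (card ?V))
          + (\<Sum>j<k. (g x - g (x[i:=x!j, j:=x!i]))^2 / real (card ?V))"
        using ucc_inner[OF x, of _ "\<lambda>y. (g x - g y)^2 / real (card ?V)"] by simp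
      thus ?thesis by simp
    qed
    finally show "?thesis x" by (simp add: sum_divide_distrib sum.distrib add_divide_distrib)
  qed
  hence "dirichlet_form ?V (uniform_dist ?V) (P_ucc k N) g =
     (1/2) * (\<Sum>x\<in>?V. ((\<Sum>i<k. \<Sum>l\<in>{1..N} - set x. (g x - g (x[i:=l]))^2) + (\<Sum>i<k. \<Sum>j<k. (g x - g (x[i:=x!j, j:=x!i]))^2)) / real (card ?V) / ?c)"
    unfolding dirichlet_form_def by simp
  thus ?thesis unfolding SS_def WW_def by (simp add: sum_divide_distrib[symmetric] sum.distrib)
qed



lemma three_sq: "((u::real)+v+w)^2 \<le> 3*(u^2+v^2+w^2)"
proof -
  have "0 \<le> (u-v)^2+(v-w)^2+(u-w)^2" by simp
  thus ?thesis by (simp add: power2_eq_square algebra_simps)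
qed

lemma path_ineq:
  fixes g :: "nat list \<Rightarrow> real"
  assumes x: "x \<in> Theta k N" and i: "i < k" and j: "j < k" and l: "l \<in> {1..N} - set x"
  shows "(g x - g (x[i:=x!j, j:=x!i]))^2 \<le> 3 * ((g x - g (x[i:=l]))^2
     + (g (x[i:=l]) - g (x[i:=l, j:=x!i]))^2
     + (g (x[i:=x!j, j:=x!i]) - g ((x[i:=x!j, j:=x!i])[i:=l]))^2)"
proof (cases "i = j")
  case True
  thus ?thesis by simp
next
  case False
  have e: "(x[i:=x!j, j:=x!i])[i:=l] = x[i:=l, j:=x!i]"
    using False by (metis list_update_overwrite list_update_swap)
  have "(g x - g (x[i:=x!j, j:=x!i]))^2 = ((g x - g (x[i:=l])) + (g (x[i:=l]) - g (x[i:=l, j:=x!i]))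
      + (g (x[i:=l, j:=x!i]) - g (x[i:=x!j, j:=x!i])))^2" by simp
  also have "\<dots> \<le> 3 * ((g x - g (x[i:=l]))^2 + (g (x[i:=l]) - g (x[i:=l, j:=x!i]))^2
      + (g (x[i:=l, j:=x!i]) - g (x[i:=x!j, j:=x!i]))^2)" by (rule three_sq)
  also have "(g (x[i:=l, j:=x!i]) - g (x[i:=x!j, j:=x!i]))^2 = (g (x[i:=x!j, j:=x!i]) - g ((x[i:=x!j, j:=x!i])[i:=l]))^2"
    unfolding e by (simp add: power2_commute)
  finally show ?thesis .
qed

lemma sw_sw: assumes "i < length x" "j < length x"
  shows "(x[i:=x!j, j:=x!i])[i:=(x[i:=x!j, j:=x!i])!j, j:=(x[i:=x!j, j:=x!i])!i] = x"
  using assms by (cases "i = j") (auto simp: list_eq_iff_nth_eq nth_list_update)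

lemma sw_bij: assumes "i < k" "j < k"
  shows "bij_betw (\<lambda>x. x[i:=x!j, j:=x!i]) (Theta k N) (Theta k N)"
proof (rule bij_betw_byWitness[where f'="\<lambda>x. x[i:=x!j, j:=x!i]"])
  show "\<forall>a\<in>Theta k N. (\<lambda>x. x[i:=x!j, j:=x!i]) ((\<lambda>x. x[i:=x!j, j:=x!i]) a) = a"
  proof
    fix a assume "a \<in> Theta k N"
    hence "length a = k" by (simp add: Theta_def)
    thus "(\<lambda>x. x[i:=x!j, j:=x!i]) ((\<lambda>x. x[i:=x!j, j:=x!i]) a) = a"
      using assms by (intro sw_sw) auto
  qed
  thus "\<forall>a\<in>Theta k N. (\<lambda>x. x[i:=x!j, j:=x!i]) ((\<lambda>x. x[i:=x!j, j:=x!i]) a) = a" .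
  show "(\<lambda>x. x[i:=x!j, j:=x!i]) ` Theta k N \<subseteq> Theta k N" using swap_Theta assms by auto
  thus "(\<lambda>x. x[i:=x!j, j:=x!i]) ` Theta k N \<subseteq> Theta k N" .
qed

lemma T3:
  "(\<Sum>x\<in>Theta k N. \<Sum>i<k. \<Sum>j<k. \<Sum>l\<in>{1..N} - set x.
      (g (x[i:=x!j, j:=x!i]) - g ((x[i:=x!j, j:=x!i])[i:=l]))^2) = real k * SS k N g"
proof -
  let ?V = "Theta k N"
  define H where "H i y = (\<Sum>l\<in>{1..N} - set y. (g y - g (y[i:=l]))^2)" for i y
  have "(\<Sum>x\<in>?V. \<Sum>i<k. \<Sum>j<k. \<Sum>l\<in>{1..N} - set x.
      (g (x[i:=x!j, j:=x!i]) - g ((x[i:=x!j, j:=x!i])[i:=l]))^2)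
      = (\<Sum>x\<in>?V. \<Sum>i<k. \<Sum>j<k. H i (x[i:=x!j, j:=x!i]))"
    unfolding H_def by (intro sum.cong refl) (auto simp: Theta_def)
  also have "\<dots> = (\<Sum>i<k. \<Sum>j<k. \<Sum>x\<in>?V. H i (x[i:=x!j, j:=x!i]))"
    by (subst sum.swap, rule sum.cong[OF refl], rule sum.swap)
  also have "\<dots> = (\<Sum>i<k. \<Sum>j<k. \<Sum>y\<in>?V. H i y)"
  proof -
    have "\<And>i j. i<k \<Longrightarrow> j<k \<Longrightarrow> (\<Sum>x\<in>?V. H i (x[i:=x!j, j:=x!i])) = (\<Sum>y\<in>?V. H i y)"
      by (rule sum.reindex_bij_betw[OF sw_bij])
    thus ?thesis by simp
  qed
  also have "\<dots> = real k * (\<Sum>i<k. \<Sum>y\<in>?V. H i y)"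
    by (simp add: sum_distrib_left)
  also have "(\<Sum>i<k. \<Sum>y\<in>?V. H i y) = SS k N g"
    unfolding SS_def H_def by (rule sum.swap)
  finally show ?thesis .
qed

lemma T1:
  "(\<Sum>x\<in>Theta k N. \<Sum>i<k. \<Sum>j<k. \<Sum>l\<in>{1..N} - set x.
      (g x - g (x[i:=l]))^2) = real k * SS k N g"
  unfolding SS_def by (simp add: sum_distrib_left)

lemma T2:
  "(\<Sum>x\<in>Theta k N. \<Sum>i<k. \<Sum>j<k. \<Sum>l\<in>{1..N} - set x.
      (g (x[i:=l]) - g (x[i:=l, j:=x!i]))^2) = real k * SS k N g"
proof -
  let ?V = "Theta k N"
  let ?F = "\<lambda>x. {1..N} - set x"
  define K where "K z c = (\<Sum>j<k. (g z - g (z[j:=c]))^2)" for z c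
  have fin: "finite ?V" "\<And>x. finite (?F x)" by (auto simp: Theta_finite)
  have "(\<Sum>x\<in>?V. \<Sum>i<k. \<Sum>j<k. \<Sum>l\<in>?F x.
      (g (x[i:=l]) - g (x[i:=l, j:=x!i]))^2) = (\<Sum>i<k. \<Sum>x\<in>?V. \<Sum>l\<in>?F x. K (x[i:=l]) (x!i))"
  proof -
    have "\<And>x i. (\<Sum>j<k. \<Sum>l\<in>?F x. (g (x[i:=l]) - g (x[i:=l, j:=x!i]))^2)
       = (\<Sum>l\<in>?F x. \<Sum>j<k. (g (x[i:=l]) - g (x[i:=l, j:=x!i]))^2)" by (rule sum.swap)
    hence "(\<Sum>x\<in>?V. \<Sum>i<k. \<Sum>j<k. \<Sum>l\<in>?F x.
      (g (x[i:=l]) - g (x[i:=l, j:=x!i]))^2) = (\<Sum>x\<in>?V. \<Sum>i<k. \<Sum>l\<in>?F x. K (x[i:=l]) (x!i))"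
      unfolding K_def by simp
    also have "\<dots> = (\<Sum>i<k. \<Sum>x\<in>?V. \<Sum>l\<in>?F x. K (x[i:=l]) (x!i))" by (rule sum.swap)
    finally show ?thesis .
  qed
  also have "\<dots> = (\<Sum>i<k. \<Sum>z\<in>?V. \<Sum>c\<in>?F z. K z c)"
  proof (rule sum.cong[OF refl])
    fix i assume "i \<in> {..<k}" hence i: "i < k" by simp
    let ?phi = "\<lambda>(x, l). (x[i:=l], x!i)"
    have bij: "bij_betw ?phi (Sigma ?V ?F) (Sigma ?V ?F)"
    proof (rule bij_betw_byWitness[where f'="?phi"])
      show inv: "\<forall>a\<in>Sigma ?V ?F. ?phi (?phi a) = a"
        using i by (auto simp: Theta_def)
      thus "\<forall>a\<in>Sigma ?V ?F. ?phi (?phi a) = a" .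
      show "?phi ` Sigma ?V ?F \<subseteq> Sigma ?V ?F"
      proof
        fix p assume "p \<in> ?phi ` Sigma ?V ?F"
        then obtain x l where p: "p = (x[i:=l], x!i)" and x: "x \<in> ?V" and l: "l \<in> ?F x" by auto
        have len: "length x = k" and d: "distinct x" and sub: "set x \<subseteq> {1..N}" using x by (auto simp: Theta_def)
        have m1: "x[i:=l] \<in> ?V" using upd_Theta[OF x i] l by auto
        have "x!i \<notin> set (x[i:=l])"
        proof
          assume "x!i \<in> set (x[i:=l])"
          then obtain m where m: "m < k" "x[i:=l]!m = x!i" using len by (auto simp: in_set_conv_nth)
          show False
          proof (cases "m = i")
            case True thus False using m l i len by auto
          next
            case False thus False using m d len i by (auto simp: nth_list_update nth_eq_iff_index_eq)
          qed
        qed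
        moreover have "x!i \<in> set x" using i len by simp
        hence "x!i \<in> {1..N}" using sub by blast
        ultimately show "p \<in> Sigma ?V ?F" using p m1 by auto
      qed
      show "?phi ` Sigma ?V ?F \<subseteq> Sigma ?V ?F" by fact
    qed
    have "(\<Sum>x\<in>?V. \<Sum>l\<in>?F x. K (x[i:=l]) (x!i)) = (\<Sum>p\<in>Sigma ?V ?F. (case_prod K) (?phi p))"
      by (subst sum.Sigma[OF fin(1)]) (auto simp: fin split_beta)
    also have "\<dots> = (\<Sum>p\<in>Sigma ?V ?F. case_prod K p)"
      by (rule sum.reindex_bij_betw[OF bij])
    also have "\<dots> = (\<Sum>z\<in>?V. \<Sum>c\<in>?F z. K z c)"
      by (subst sum.Sigma[OF fin(1)]) (auto simp: fin)
    finally show "(\<Sum>x\<in>?V. \<Sum>l\<in>?F x. K (x[i:=l]) (x!i)) = (\<Sum>z\<in>?V. \<Sum>c\<in>?F z. K z c)" .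
  qed
  also have "\<dots> = real k * (\<Sum>z\<in>?V. \<Sum>c\<in>?F z. K z c)" by simp
  also have "(\<Sum>z\<in>?V. \<Sum>c\<in>?F z. K z c) = SS k N g"
    unfolding SS_def K_def by (rule sum.cong[OF refl], rule sum.swap)
  finally show ?thesis .
qed



lemma SS_nonneg: "SS k N g \<ge> 0" unfolding SS_def by (intro sum_nonneg) auto
lemma WW_nonneg: "WW k N g \<ge> 0" unfolding WW_def by (intro sum_nonneg) auto

lemma W_bound:
  fixes g :: "nat list \<Rightarrow> real"
  assumes "k < N"
  shows "(real N - real k) * WW k N g \<le> 9 * real k * SS k N g"
proof -
  let ?V = "Theta k N"
  let ?F = "\<lambda>x. {1..N} - set x"
  have "(real N - real k) * WW k N g =
     (\<Sum>x\<in>?V. \<Sum>i<k. \<Sum>j<k. \<Sum>l\<in>?F x. (g x - g (x[i:=x!j, j:=x!i]))^2)"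
  proof -
    have "\<And>x. x \<in> ?V \<Longrightarrow> real (card (?F x)) = real N - real k"
      using card_free assms by (simp add: of_nat_diff)
    thus ?thesis unfolding WW_def by (simp add: sum_distrib_left)
  qed
  also have "\<dots> \<le> (\<Sum>x\<in>?V. \<Sum>i<k. \<Sum>j<k. \<Sum>l\<in>?F x. 3 * ((g x - g (x[i:=l]))^2
     + (g (x[i:=l]) - g (x[i:=l, j:=x!i]))^2
     + (g (x[i:=x!j, j:=x!i]) - g ((x[i:=x!j, j:=x!i])[i:=l]))^2))"
    by (intro sum_mono path_ineq) auto
  also have "\<dots> = 3 * ((\<Sum>x\<in>?V. \<Sum>i<k. \<Sum>j<k. \<Sum>l\<in>?F x. (g x - g (x[i:=l]))^2)
     + (\<Sum>x\<in>?V. \<Sum>i<k. \<Sum>j<k. \<Sum>l\<in>?F x. (g (x[i:=l]) - g (x[i:=l, j:=x!i]))^2)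
     + (\<Sum>x\<in>?V. \<Sum>i<k. \<Sum>j<k. \<Sum>l\<in>?F x. (g (x[i:=x!j, j:=x!i]) - g ((x[i:=x!j, j:=x!i])[i:=l]))^2))"
    by (simp only: sum.distrib[symmetric] sum_distrib_left distrib_left)
  also have "\<dots> = 9 * real k * SS k N g" unfolding T1 T2 T3 by simp
  finally show ?thesis .
qed

lemma frac_aux: "(a::real) > 0 \<Longrightarrow> b > 0 \<Longrightarrow> x * b \<le> y * a \<Longrightarrow> x / a \<le> y / b"
  by (simp add: divide_simps)

lemma compare:
  fixes g :: "nat list \<Rightarrow> real"
  assumes "1 \<le> k" "k < N"
  shows "dirichlet_form (Theta k N) (uniform_dist (Theta k N)) (P_ucc k N) g
     \<le> 19 * dirichlet_form (Theta k N) (uniform_dist (Theta k N)) (P_cc k N) g"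
proof -
  define S where "S = SS k N g"
  define W where "W = WW k N g"
  define C where "C = 2 * real (card (Theta k N))"
  define m where "m = real N - real k"
  have S0: "S \<ge> 0" and W0: "W \<ge> 0" using SS_nonneg WW_nonneg unfolding S_def W_def by auto
  have C0: "C \<ge> 0" unfolding C_def by simp
  have m1: "m \<ge> 1" using assms unfolding m_def by simp
  have k1: "real k \<ge> 1" using assms by simp
  have Wb: "m * W \<le> 9 * real k * S" using W_bound[OF assms(2), of g] unfolding m_def W_def S_def .
  have NN: "real N = m + real k" unfolding m_def by simp
  have key: "(S + W) * (m + 1) \<le> 19 * S * (m + real k)"
  proof -
    have "W * (m + 1) \<le> W * (2 * m)" using W0 m1 by (intro mult_left_mono) auto
    hence "(S + W) * (m + 1) \<le> S * (m + 1) + 2 * (m * W)" by (simp add: algebra_simps)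
    also have "\<dots> \<le> S * (m + 1) + 18 * real k * S" using Wb by (simp add: algebra_simps)
    also have "\<dots> \<le> 19 * S * (m + real k)"
    proof -
      have "0 \<le> S * (18 * m + real k - 1)" using S0 m1 k1 by simp
      thus ?thesis by (simp add: algebra_simps)
    qed
    finally show ?thesis .
  qed
  show ?thesis
  proof (cases "C = 0")
    case True
    thus ?thesis unfolding dir_cc dir_ucc C_def by simp
  next
    case False
    hence Cp: "C > 0" using C0 by simp
    have pos1: "C * (real k * real N) > 0" using Cp k1 m1 NN by simp
    have pos2: "C * (real k * (real N - real k + 1)) > 0" using Cp k1 m1 unfolding m_def by simp
    have "(S + W) / (C * (real k * real N)) \<le> 19 * (S / (C * (real k * (real N - real k + 1))))"
    proof -
      have "(S + W) * (C * (real k * (real N - real k + 1))) \<le> 19 * S * (C * (real k * real N))"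
      proof -
        have "(S + W) * (C * (real k * (real N - real k + 1))) = ((S + W) * (m + 1)) * (C * real k)"
          unfolding m_def by (simp add: algebra_simps)
        also have "\<dots> \<le> (19 * S * (m + real k)) * (C * real k)"
          using key Cp k1 by (intro mult_right_mono) auto
        also have "\<dots> = 19 * S * (C * (real k * real N))" unfolding NN by (simp add: algebra_simps)
        finally show ?thesis .
      qed
      hence "(S + W) / (C * (real k * real N)) \<le> (19 * S) / (C * (real k * (real N - real k + 1)))"
        by (rule frac_aux[OF pos1 pos2])
      thus ?thesis by simp
    qed
    thus ?thesis unfolding dir_cc dir_ucc S_def W_def C_def by simp
  qed
qed



lemma xlnx: assumes "(a::real) > 0" "E > 0" shows "a * ln (a / E) \<ge> a - E"
proof -
  have "ln (E / a) \<le> E / a - 1" using assms by (intro ln_le_minus_one) auto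
  moreover have "ln (a / E) = - ln (E / a)" using assms by (simp add: ln_div)
  ultimately have "ln (a / E) \<ge> 1 - E / a" by simp
  hence "a * ln (a / E) \<ge> a * (1 - E / a)" using assms by (intro mult_left_mono) auto
  thus ?thesis using assms by (simp add: algebra_simps)
qed

lemma ent_nonneg:
  assumes fin: "finite V" and ne: "V \<noteq> {}" and f: "\<forall>x\<in>V. f x \<ge> 0"
  shows "entropy V (uniform_dist V) f \<ge> 0"
proof -
  define E where "E = expect V (uniform_dist V) f"
  have cV: "real (card V) > 0" using fin ne by (simp add: card_gt_0_iff)
  have E0: "E \<ge> 0" unfolding E_def expect_def uniform_dist_def using f by (intro sum_nonneg) auto
  show ?thesis
  proof (cases "E = 0")
    case True
    have "(\<Sum>x\<in>V. f x / real (card V)) = 0" using True unfolding E_def expect_def uniform_dist_def by simp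
    hence "\<forall>x\<in>V. f x / real (card V) = 0" using f fin by (subst sum_nonneg_eq_0_iff[symmetric]) auto
    hence "\<forall>x\<in>V. f x = 0" using cV by simp
    thus ?thesis unfolding entropy_def by simp
  next
    case False
    hence Ep: "E > 0" using E0 by simp
    have "(\<Sum>x\<in>V. uniform_dist V x * (f x - E)) \<le> entropy V (uniform_dist V) f"
      unfolding entropy_def E_def[symmetric]
    proof (rule sum_mono)
      fix x assume x: "x \<in> V"
      have "(if f x = 0 then 0 else f x * ln (f x / E)) \<ge> f x - E"
        using xlnx[of "f x" E] Ep f x by auto
      thus "uniform_dist V x * (f x - E) \<le> uniform_dist V x * (if f x = 0 then 0 else f x * ln (f x / E))"
        using cV by (intro mult_left_mono) (auto simp: uniform_dist_def)
    qed
    moreover have "(\<Sum>x\<in>V. uniform_dist V x * (f x - E)) = 0"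
    proof -
      have "(\<Sum>x\<in>V. uniform_dist V x * (f x - E)) = E - (\<Sum>x\<in>V. E / real (card V))"
        unfolding E_def expect_def uniform_dist_def by (simp add: sum_subtractf algebra_simps)
      also have "(\<Sum>x\<in>V. E / real (card V)) = E" using cV by simp
      finally show ?thesis by simp
    qed
    ultimately show ?thesis by simp
  qed
qed

lemma dir_nonneg_ucc: "dirichlet_form (Theta k N) (uniform_dist (Theta k N)) (P_ucc k N) g \<ge> 0"
  unfolding dir_ucc using SS_nonneg WW_nonneg by simp

lemma Theta_two:
  assumes "1 \<le> k" "k < N"
  shows "\<exists>x\<in>Theta k N. \<exists>y\<in>Theta k N. x \<noteq> y"
proof -
  define x where "x = [1..<k+1]"
  have x: "x \<in> Theta k N" unfolding x_def Theta_def using assms by auto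
  have y: "x[0:=N] \<in> Theta k N" using upd_Theta[OF x, of 0 N] assms unfolding x_def by auto
  have a: "x[0:=N] ! 0 = N" using assms unfolding x_def by simp
  have b: "x ! 0 = 1" using assms unfolding x_def by (simp add: nth_upt del: upt_Suc)
  have "x[0:=N] \<noteq> x" using a b assms by auto
  thus ?thesis using x y by blast
qed

theorem mainTheorem7:
  fixes k N :: nat
  assumes "1 \<le> k" and "k < N"
  shows "log_sobolev (Theta k N) (uniform_dist (Theta k N)) (P_cc k N)
           \<ge> (1/19) * log_sobolev (Theta k N) (uniform_dist (Theta k N)) (P_ucc k N)"
proof -
  let ?V = "Theta k N" let ?pi = "uniform_dist (Theta k N)"
  let ?A = "\<lambda>P. {dirichlet_form ?V ?pi P (\<lambda>x. sqrt (f x)) / entropy ?V ?pi f | f.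
            (\<forall>x\<in>?V. f x \<ge> 0) \<and> (\<exists>x\<in>?V. \<exists>y\<in>?V. f x \<noteq> f y)}"
  have fin: "finite ?V" by (rule Theta_finite)
  obtain x0 y0 where xy: "x0 \<in> ?V" "y0 \<in> ?V" "x0 \<noteq> y0" using Theta_two[OF assms] by blast
  have ne: "?A (P_cc k N) \<noteq> {}"
  proof -
    define f0 where "f0 = (\<lambda>x. if x = x0 then 1 else (0::real))"
    have "(\<forall>x\<in>?V. f0 x \<ge> 0) \<and> (\<exists>x\<in>?V. \<exists>y\<in>?V. f0 x \<noteq> f0 y)"
      using xy unfolding f0_def by auto
    thus ?thesis by blast
  qed
  have bdd: "bdd_below (?A (P_ucc k N))"
  proof (rule bdd_belowI[of _ 0])
    fix r assume "r \<in> ?A (P_ucc k N)"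
    then obtain f where r: "r = dirichlet_form ?V ?pi (P_ucc k N) (\<lambda>x. sqrt (f x)) / entropy ?V ?pi f"
      and f: "\<forall>x\<in>?V. f x \<ge> 0" by blast
    have "entropy ?V ?pi f \<ge> 0" using ent_nonneg[OF fin _ f] xy by auto
    thus "0 \<le> r" unfolding r using dir_nonneg_ucc by simp
  qed
  show ?thesis unfolding log_sobolev_def
  proof (rule cInf_greatest[OF ne])
    fix r assume "r \<in> ?A (P_cc k N)"
    then obtain f where r: "r = dirichlet_form ?V ?pi (P_cc k N) (\<lambda>x. sqrt (f x)) / entropy ?V ?pi f"
      and f: "\<forall>x\<in>?V. f x \<ge> 0" and nc: "\<exists>x\<in>?V. \<exists>y\<in>?V. f x \<noteq> f y" by blast
    let ?Ent = "entropy ?V ?pi f"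
    let ?Du = "dirichlet_form ?V ?pi (P_ucc k N) (\<lambda>x. sqrt (f x))"
    let ?Dc = "dirichlet_form ?V ?pi (P_cc k N) (\<lambda>x. sqrt (f x))"
    have Ent: "?Ent \<ge> 0" using ent_nonneg[OF fin _ f] xy by auto
    have "?Du / ?Ent \<in> ?A (P_ucc k N)" using f nc by blast
    hence "Inf (?A (P_ucc k N)) \<le> ?Du / ?Ent" by (rule cInf_lower[OF _ bdd])
    also have "\<dots> \<le> (19 * ?Dc) / ?Ent" using compare[OF assms] Ent by (intro divide_right_mono) auto
    finally have "Inf (?A (P_ucc k N)) \<le> (19 * ?Dc) / ?Ent" .
    hence "1/19 * Inf (?A (P_ucc k N)) \<le> 1/19 * ((19 * ?Dc) / ?Ent)" by (rule mult_left_mono) simp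
    also have "1/19 * ((19 * ?Dc) / ?Ent) = r" unfolding r by simp
    finally show "1/19 * Inf (?A (P_ucc k N)) \<le> r" .
  qed
qed

end
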